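(* Let $\mathbf{h}_1,\mathbf{h}_2\in\mathbb{C}^M$ be nonzero, $P>0$, and $f(\mathbf{w})=\min\{|\mathbf{h}_1^H\mathbf{w}|^2,|\mathbf{h}_2^H\mathbf{w}|^2\}$. Consider $\max_{\mathbf{w}\in\mathbb{C}^M,\ \mathbf{w}^H\mathbf{w}=P} f(\mathbf{w})$. Scenario 1: if $\mathbf{h}_1=\tau\mathbf{h}_2$ for some $\tau\in\mathbb{C}$, the maximum equals $\min\{P\|\mathbf{h}_1\|^2,P\|\mathbf{h}_2\|^2\}$, attained at $\mathbf{w}=\sqrt{P}\,\mathbf{h}_2/\|\mathbf{h}_2\|$ (equivalently, up to a unit-modulus phase, $\sqrt P\,\mathbf{h}_1/\|\mathbf{h}_1\|$). Scenario 2: if $\mathbf{h}_1,\mathbf{h}_2$ are linearly independent, with $\lambda_1,\lambda_2,\mathbf{V},\theta,\alpha,\beta,\gamma$ as in the context, the maximum is attained at $\mathbf{w}^{\rm opt}=\mathbf{V}\tilde{\mathbf{w}}^{\rm opt}$, where: (1) if $\lambda_1\le\lambda_2$: (a) for $0\le\sin\theta\le\lambda_1/\lambda_2$, the maximum is $\frac{P\lambda_1\lambda_2}{\lambda_1+\lambda_2}\frac{(1+\sin\theta)^2}{\cos^2\theta}$ with $\tilde{\mathbf{w}}^{\rm opt}=[\sqrt{\tfrac{P\lambda_2}{\lambda_1+\lambda_2}}e^{j\beta},\sqrt{\tfrac{P\lambda_1}{\lambda_1+\lambda_2}}e^{j(\beta-\alpha)},0,\dots,0]^T$; (b) for $\lambda_1/\lambda_2<\sin\theta<1$,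 the maximum is $\frac{P(\lambda_1+\lambda_2\sin^2\theta)}{\cos^2\theta}$ with $\tilde{\mathbf{w}}^{\rm opt}=[\sqrt{\tfrac{P\lambda_1}{\lambda_1+\lambda_2\sin^2\theta}}e^{j\beta},\sqrt{\tfrac{P\lambda_2\sin^2\theta}{\lambda_1+\lambda_2\sin^2\theta}}e^{j(\beta-\alpha)},0,\dots,0]^T$; (2) if $\lambda_1>\lambda_2$: (a) for $0\le\sin\theta\le\lambda_2/\lambda_1$, the maximum is $\frac{P\lambda_1\lambda_2}{\lambda_1+\lambda_2}\frac{(1+\sin\theta)^2}{\cos^2\theta}$ with $\tilde{\mathbf{w}}^{\rm opt}=[\sqrt{\tfrac{P\lambda_2}{\lambda_1+\lambda_2}}e^{j(\gamma+\alpha)},\sqrt{\tfrac{P\lambda_1}{\lambda_1+\lambda_2}}e^{j\gamma},0,\dots,0]^T$; (b) for $\lambda_2/\lambda_1<\sin\theta<1$, the maximum is $\frac{P(\lambda_1\sin^2\theta+\lambda_2)}{\cos^2\theta}$ with $\tilde{\mathbf{w}}^{\rm opt}=[\sqrt{\tfrac{P\lambda_1}{\lambda_1+\lambda_2\csc^2\theta}}e^{j(\gamma+\alpha)},\sqrt{\tfrac{P\lambda_2}{\lambda_1\sin^2\theta+\lambda_2}}e^{j\gamma},0,\dots,0]^T$.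
   Context: For linearly independent $\mathbf{h}_1,\mathbf{h}_2\in\mathbb{C}^M$, let $\mathbf{A}=\mathbf{h}_1\mathbf{h}_1^H-\mathbf{h}_2\mathbf{h}_2^H$ (rank 2), with eigendecomposition $\mathbf{A}=\mathbf{V}\boldsymbol{\Sigma}\mathbf{V}^H$, $\mathbf{V}$ unitary, $\boldsymbol{\Sigma}=\mathrm{diag}(\lambda_1,-\lambda_2,0,\dots,0)$, $\lambda_1,\lambda_2>0$. Let $\tilde{\mathbf{h}}_k=\mathbf{V}^H\mathbf{h}_k$, whose entries beyond the second vanish; write $\tilde{\mathbf{h}}_1=[\tilde h_{1,1},\tilde h_{1,2},0,\dots]^T$, $\tilde{\mathbf{h}}_2=[\tilde h_{2,1},\tilde h_{2,2},0,\dots]^T$. Define $\theta=\arccos\frac{\sqrt{\lambda_1}}{|\tilde h_{1,1}|}\in[0,\pi/2)$, $\beta=\arg\tilde h_{1,1}$, $\gamma=\arg\tilde h_{2,2}$, $\alpha=\arg\tilde h_{2,1}-\arg\tilde h_{2,2}$ (arbitrary if $\tilde h_{2,1}=0$). $j=\sqrt{-1}$. *)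

theory Defs
  imports Complex_Main "Jordan_Normal_Form.Schur_Decomposition"
begin

definition hprod :: "complex vec \<Rightarrow> complex vec \<Rightarrow> complex" where
  "hprod h w = (\<Sum>i<dim_vec h. cnj (h $ i) * w $ i)"

definition vnorm :: "complex vec \<Rightarrow> real" where
  "vnorm h = sqrt (Re (hprod h h))"

definition outer :: "complex vec \<Rightarrow> complex mat" where
  "outer h = mat (dim_vec h) (dim_vec h) (\<lambda>(i, k). h $ i * cnj (h $ k))"

definition fobj :: "complex vec \<Rightarrow> complex vec \<Rightarrow> complex vec \<Rightarrow> real" where
  "fobj h1 h2 w = min ((cmod (hprod h1 w))\<^sup>2) ((cmod (hprod h2 w))\<^sup>2)"

definition feasible :: "nat \<Rightarrow> real \<Rightarrow> complex vec \<Rightarrow> bool" where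
  "feasible M P w \<longleftrightarrow> w \<in> carrier_vec M \<and> hprod w w = complex_of_real P"

definition max_attained ::
  "nat \<Rightarrow> real \<Rightarrow> complex vec \<Rightarrow> complex vec \<Rightarrow> complex vec \<Rightarrow> real \<Rightarrow> bool" where
  "max_attained M P h1 h2 w v \<longleftrightarrow>
     feasible M P w \<and> fobj h1 h2 w = v \<and> (\<forall>u. feasible M P u \<longrightarrow> fobj h1 h2 u \<le> v)"

definition unitary_mat :: "nat \<Rightarrow> complex mat \<Rightarrow> bool" where
  "unitary_mat M V \<longleftrightarrow> V \<in> carrier_mat M M \<and>
     mat_adjoint V * V = 1\<^sub>m M \<and> V * mat_adjoint V = 1\<^sub>m M"

definition Sigma_mat :: "nat \<Rightarrow> real \<Rightarrow> real \<Rightarrow> complex mat" where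
  "Sigma_mat M l1 l2 = mat M M (\<lambda>(i, k). if i = k then
      (if i = 0 then complex_of_real l1 else if i = 1 then - complex_of_real l2 else 0) else 0)"

definition vec2 :: "nat \<Rightarrow> complex \<Rightarrow> complex \<Rightarrow> complex vec" where
  "vec2 M a b = vec M (\<lambda>i. if i = 0 then a else if i = 1 then b else 0)"

end

theory Submission
  imports Defs
begin

lemma adj_carrier: "V \<in> carrier_mat n m \<Longrightarrow> mat_adjoint V \<in> carrier_mat m n"
  unfolding mat_adjoint_def mat_of_rows_def by auto

lemma adj_index: "V \<in> carrier_mat n m \<Longrightarrow> i < m \<Longrightarrow> j < n \<Longrightarrow>
   mat_adjoint V $$ (i,j) = cnj (V $$ (j,i))"
  unfolding mat_adjoint_def mat_of_rows_def by auto

lemma hprod_mult: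
  assumes V: "V \<in> carrier_mat n n" and h: "h \<in> carrier_vec n" and w: "w \<in> carrier_vec n"
  shows "hprod h (V *\<^sub>v w) = hprod (mat_adjoint V *\<^sub>v h) w"
proof -
  have "hprod h (V *\<^sub>v w) = (\<Sum>i<n. cnj (h $ i) * (\<Sum>j<n. V $$ (i,j) * w $ j))"
    using V h w unfolding hprod_def by (auto simp: mult_mat_vec_def scalar_prod_def atLeast0LessThan)
  also have "\<dots> = (\<Sum>i<n. \<Sum>j<n. cnj (h $ i) * V $$ (i,j) * w $ j)"
    by (simp add: sum_distrib_left mult.assoc)
  also have "\<dots> = (\<Sum>j<n. \<Sum>i<n. cnj (h $ i) * V $$ (i,j) * w $ j)"
    by (rule sum.swap)
  also have "\<dots> = (\<Sum>j<n. cnj (\<Sum>i<n. cnj (V $$ (i,j)) * h $ i) * w $ j)"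
    by (simp add: sum_distrib_left sum_distrib_right mult_ac)
  also have "\<dots> = hprod (mat_adjoint V *\<^sub>v h) w"
    using V h w adj_carrier[OF V] unfolding hprod_def
    by (auto simp: mult_mat_vec_def scalar_prod_def atLeast0LessThan adj_index intro!: sum.cong)
  finally show ?thesis .
qed

lemma adjv_index:
  assumes V: "V \<in> carrier_mat n n" and h: "h \<in> carrier_vec n" and i: "i < n"
  shows "(mat_adjoint V *\<^sub>v h) $ i = (\<Sum>j<n. cnj (V $$ (j,i)) * h $ j)"
  using V h i adj_carrier[OF V]
  by (auto simp: mult_mat_vec_def scalar_prod_def atLeast0LessThan adj_index intro!: sum.cong)

lemma conj_outer:
  assumes V: "V \<in> carrier_mat n n" and p: "p \<in> carrier_vec n" and q: "q \<in> carrier_vec n"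
    and i: "i < n" and k: "k < n"
  shows "(mat_adjoint V * (outer p - outer q) * V) $$ (i,k) =
     (mat_adjoint V *\<^sub>v p) $ i * cnj ((mat_adjoint V *\<^sub>v p) $ k)
   - (mat_adjoint V *\<^sub>v q) $ i * cnj ((mat_adjoint V *\<^sub>v q) $ k)"
proof -
  have op: "outer p - outer q \<in> carrier_mat n n" using p q unfolding outer_def by auto
  have "(mat_adjoint V * (outer p - outer q) * V) $$ (i,k) =
     (\<Sum>j<n. cnj (V $$ (j,i)) * (\<Sum>l<n. (p $ j * cnj (p $ l) - q $ j * cnj (q $ l)) * V $$ (l,k)))"
    using V p q i k op adj_carrier[OF V] unfolding outer_def
    by (auto simp: scalar_prod_def atLeast0LessThan adj_index intro!: sum.cong)
  also have "\<dots> = (\<Sum>j<n. \<Sum>l<n. (cnj (V $$ (j,i)) * p $ j) * (V $$ (l,k) * cnj (p $ l))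
        - (cnj (V $$ (j,i)) * q $ j) * (V $$ (l,k) * cnj (q $ l)))"
    by (simp add: sum_distrib_left algebra_simps)
  also have "\<dots> = (\<Sum>j<n. cnj (V $$ (j,i)) * p $ j) * (\<Sum>l<n. V $$ (l,k) * cnj (p $ l))
       - (\<Sum>j<n. cnj (V $$ (j,i)) * q $ j) * (\<Sum>l<n. V $$ (l,k) * cnj (q $ l))"
    by (simp add: sum_subtractf sum_product)
  also have "\<dots> = (mat_adjoint V *\<^sub>v p) $ i * cnj ((mat_adjoint V *\<^sub>v p) $ k)
   - (mat_adjoint V *\<^sub>v q) $ i * cnj ((mat_adjoint V *\<^sub>v q) $ k)"
    using adjv_index[OF V p i] adjv_index[OF V p k] adjv_index[OF V q i] adjv_index[OF V q k]
    by (simp add: mult.commute)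
  finally show ?thesis .
qed

lemma sandwich:
  assumes U: "unitary_mat n V" and S: "S \<in> carrier_mat n n"
  shows "mat_adjoint V * (V * S * mat_adjoint V) * V = S"
proof -
  have V: "V \<in> carrier_mat n n" and A: "mat_adjoint V \<in> carrier_mat n n"
    and I: "mat_adjoint V * V = 1\<^sub>m n" using U adj_carrier unfolding unitary_mat_def by auto
  have "mat_adjoint V * (V * S * mat_adjoint V) * V = (mat_adjoint V * V) * S * (mat_adjoint V * V)"
    using V A S by (simp add: assoc_mult_mat[of _ n n _ n _ n])
  also have "\<dots> = S" using I S by simp
  finally show ?thesis .
qed



lemma cs_sum:
  fixes a b :: "nat \<Rightarrow> real" and I :: "nat set"
  assumes fin: "finite I"
  shows "(\<Sum>i\<in>I. a i * b i)^2 \<le> (\<Sum>i\<in>I. (a i)^2) * (\<Sum>i\<in>I. (b i)^2)"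
proof -
  have pt: "\<And>i j. (a i * b j - a j * b i)^2 = (a i)^2 * (b j)^2 + (a j)^2 * (b i)^2 - 2 * ((a i * b i) * (a j * b j))"
    by (simp add: power2_eq_square algebra_simps)
  have "0 \<le> (\<Sum>i\<in>I. \<Sum>j\<in>I. (a i * b j - a j * b i)^2)" by (intro sum_nonneg) auto
  also have "\<dots> = (\<Sum>i\<in>I. \<Sum>j\<in>I. (a i)^2 * (b j)^2) + (\<Sum>i\<in>I. \<Sum>j\<in>I. (a j)^2 * (b i)^2)
      - 2 * (\<Sum>i\<in>I. \<Sum>j\<in>I. (a i * b i) * (a j * b j))"
    unfolding pt by (simp add: sum.distrib sum_subtractf sum_distrib_left)
  also have "(\<Sum>i\<in>I. \<Sum>j\<in>I. (a i)^2 * (b j)^2) = (\<Sum>i\<in>I. (a i)^2) * (\<Sum>i\<in>I. (b i)^2)"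
    by (simp add: sum_product)
  also have "(\<Sum>i\<in>I. \<Sum>j\<in>I. (a j)^2 * (b i)^2) = (\<Sum>i\<in>I. (a i)^2) * (\<Sum>i\<in>I. (b i)^2)"
    by (subst sum.swap) (simp add: sum_product)
  also have "(\<Sum>i\<in>I. \<Sum>j\<in>I. (a i * b i) * (a j * b j)) = (\<Sum>i\<in>I. a i * b i)^2"
    by (simp add: sum_product power2_eq_square)
  finally show ?thesis by simp
qed

lemma kill:
  fixes a1 b1 a2 b2 t u :: complex and l1 l2 :: real
  assumes l1: "l1 > 0" and l2: "l2 > 0"
    and E00: "a1 * cnj a1 - a2 * cnj a2 = complex_of_real l1"
    and E11: "b1 * cnj b1 - b2 * cnj b2 = - complex_of_real l2"
    and E01: "a1 * cnj b1 - a2 * cnj b2 = 0"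
    and T0: "t * cnj a1 - u * cnj a2 = 0" and T1: "t * cnj b1 - u * cnj b2 = 0"
  shows "t = 0 \<and> u = 0"
proof -
  have a1: "a1 \<noteq> 0"
  proof
    assume "a1 = 0"
    then have "complex_of_real (- ((cmod a2)^2)) = complex_of_real l1" using E00
      by (simp only: of_real_minus complex_norm_square) simp
    then have "- ((cmod a2)^2) = l1" by (rule of_real_eq_iff[THEN iffD1])
    then show False using l1 zero_le_power2[of "cmod a2"] by linarith
  qed
  have d: "a1 * b2 - a2 * b1 \<noteq> 0"
  proof
    assume d0: "a1 * b2 - a2 * b1 = 0"
    have "cnj b1 * complex_of_real l1 = cnj a1 * (a1 * cnj b1 - a2 * cnj b2) + a2 * cnj (a1 * b2 - a2 * b1)"
      unfolding E00[symmetric] by (simp add: algebra_simps)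
    also have "\<dots> = 0" using E01 d0 by simp
    finally have b1: "b1 = 0" using l1 by simp
    then have "a1 * b2 = 0" using d0 by simp
    then have b2: "b2 = 0" using a1 by simp
    have "complex_of_real l2 = 0" using E11 b1 b2 by simp
    then show False using l2 by simp
  qed
  have "u * cnj (a2 * b1 - a1 * b2) = - cnj b1 * (t * cnj a1 - u * cnj a2) + cnj a1 * (t * cnj b1 - u * cnj b2)"
    by (simp add: algebra_simps)
  also have "\<dots> = 0" using T0 T1 by simp
  finally have "u * cnj (a2 * b1 - a1 * b2) = 0" .
  moreover have "a2 * b1 - a1 * b2 \<noteq> 0" using d by (metis eq_iff_diff_eq_0)
  then have "cnj (a2 * b1 - a1 * b2) \<noteq> 0" by (metis complex_cnj_zero_iff)
  ultimately have u: "u = 0" by simp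
  then have "t * cnj a1 = 0" using T0 by simp
  then have "t = 0" using a1 by simp
  then show ?thesis using u by simp
qed

lemma M2:
  assumes h1: "h1 \<in> carrier_vec M" and h2: "h2 \<in> carrier_vec M" and nz: "h1 \<noteq> 0\<^sub>v M"
    and ind: "\<forall>a b :: complex. a \<cdot>\<^sub>v h1 + b \<cdot>\<^sub>v h2 = 0\<^sub>v M \<longrightarrow> a = 0 \<and> b = 0"
  shows "M \<ge> 2"
proof (rule ccontr)
  assume "\<not> 2 \<le> M"
  then have "M = 0 \<or> M = 1" by auto
  then show False
  proof
    assume "M = 0"
    then have "h1 = 0\<^sub>v M" using h1 by (intro eq_vecI) auto
    then show False using nz by simp
  next
    assume M1: "M = 1"
    have "(h2 $ 0) \<cdot>\<^sub>v h1 + (- h1 $ 0) \<cdot>\<^sub>v h2 = 0\<^sub>v M"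
      using h1 h2 M1 by (intro eq_vecI) auto
    then have "h2 $ 0 = 0 \<and> - h1 $ 0 = 0" using ind by blast
    then have "h1 = 0\<^sub>v M" using h1 M1 by (intro eq_vecI) auto
    then show False using nz by simp
  qed
qed

lemma hprod_self:
  assumes "h \<in> carrier_vec n"
  shows "hprod h h = complex_of_real ((vnorm h)^2)" and "(vnorm h)^2 = (\<Sum>i<n. (cmod (h $ i))^2)"
    and "vnorm h \<ge> 0"
proof -
  have pt: "\<And>i. cnj (h $ i) * h $ i = complex_of_real ((cmod (h $ i))^2)"
    by (metis complex_norm_square mult.commute)
  have e: "hprod h h = complex_of_real (\<Sum>i<n. (cmod (h $ i))^2)"
    using assms unfolding hprod_def of_real_sum pt by simp
  have "(vnorm h)^2 = (\<Sum>i<n. (cmod (h $ i))^2)"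
    unfolding vnorm_def e by (simp add: sum_nonneg)
  then show "(vnorm h)^2 = (\<Sum>i<n. (cmod (h $ i))^2)" .
  then show "hprod h h = complex_of_real ((vnorm h)^2)" using e by simp
  show "vnorm h \<ge> 0" unfolding vnorm_def e by (simp add: sum_nonneg)
qed

lemma vnorm_pos:
  assumes "h \<in> carrier_vec n" "h \<noteq> 0\<^sub>v n"
  shows "vnorm h > 0"
proof -
  obtain i where i: "i < n" "h $ i \<noteq> 0" using assms by (metis eq_vecI carrier_vecD index_zero_vec(1,2))
  have "0 < (cmod (h $ i))^2" using i by simp
  also have "\<dots> \<le> (\<Sum>j<n. (cmod (h $ j))^2)" using i by (intro member_le_sum) auto
  also have "\<dots> = (vnorm h)^2" using hprod_self(2)[OF assms(1)] by simp
  finally have "(vnorm h)^2 > 0" .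
  moreover have "vnorm h \<ge> 0" using hprod_self(3)[OF assms(1)] .
  ultimately show ?thesis by (metis less_eq_real_def power_zero_numeral zero_less_power2)
qed

lemma hprod_cs:
  assumes "h \<in> carrier_vec n" "u \<in> carrier_vec n"
  shows "(cmod (hprod h u))^2 \<le> (vnorm h)^2 * (vnorm u)^2"
proof -
  have "cmod (hprod h u) \<le> (\<Sum>i<n. cmod (h $ i) * cmod (u $ i))"
    using assms unfolding hprod_def by (rule_tac order_trans[OF norm_sum]) (simp add: norm_mult)
  then have "(cmod (hprod h u))^2 \<le> (\<Sum>i<n. cmod (h $ i) * cmod (u $ i))^2"
    by (intro power_mono) auto
  also have "\<dots> \<le> (\<Sum>i<n. (cmod (h $ i))^2) * (\<Sum>i<n. (cmod (u $ i))^2)" by (rule cs_sum) simp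
  finally show ?thesis using hprod_self(2) assms by simp
qed



lemma cs2: fixes a b x y :: real shows "(a * x + b * y)^2 \<le> (a^2 + b^2) * (x^2 + y^2)"
proof -
  have "(a^2 + b^2) * (x^2 + y^2) - (a * x + b * y)^2 = (a * y - b * x)^2"
    by (simp add: power2_eq_square algebra_simps)
  then show ?thesis using zero_le_power2[of "a * y - b * x"] by linarith
qed

lemma alg1: fixes A B R Q s :: real
  shows "A * (R * A / Q) + B * s * (R * B * s / Q) = R * (A * A + B * B * s^2) / Q"
  by (simp add: add_divide_distrib[symmetric] power2_eq_square algebra_simps)

lemma alg2: fixes A B R Q s :: real
  shows "A * s * (R * A / Q) + B * (R * B * s / Q) = R * s * (A * A + B * B) / Q"
  by (simp add: add_divide_distrib[symmetric] algebra_simps)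

lemma alg3: fixes R Q c :: real
  shows "Q \<noteq> 0 \<Longrightarrow> R * Q / c = R * (Q * Q) / (Q * c)"
  by (simp add: field_simps)

lemma alg4: fixes A B R Q s :: real
  shows "A * (R * A * s / Q) + B * s * (R * B / Q) = R * s * (A * A + B * B) / Q"
  by (simp add: add_divide_distrib[symmetric] algebra_simps)

lemma alg5: fixes A B R Q s :: real
  shows "A * s * (R * A * s / Q) + B * (R * B / Q) = R * (A * A * s^2 + B * B) / Q"
  by (simp add: add_divide_distrib[symmetric] power2_eq_square algebra_simps)

lemma R1:
  fixes l1 l2 s c p q P m :: real
  assumes l1: "l1 > 0" and l2: "l2 > 0" and s0: "0 \<le> s" and s1: "s < 1" and c: "c > 0"
    and r1: "s * l2 \<le> l1" and r2: "s * l1 \<le> l2" and p: "p \<ge> 0" and q: "q \<ge> 0"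
    and pq: "p^2 + q^2 \<le> P" and m0: "m \<ge> 0"
    and m1: "m \<le> (sqrt l1 * p + sqrt l2 * s * q) / c"
    and m2: "m \<le> (sqrt l1 * s * p + sqrt l2 * q) / c"
  shows "m^2 \<le> P * l1 * l2 / (l1 + l2) * (1 + s)^2 / c^2"
proof -
  define A where "A = sqrt l1"
  define B where "B = sqrt l2"
  have A2: "A^2 = l1" and B2: "B^2 = l2" using l1 l2 by (auto simp: A_def B_def)
  have A0: "A > 0" and B0: "B > 0" using l1 l2 by (auto simp: A_def B_def)
  define n where "n = m * c"
  have n0: "n \<ge> 0" using m0 c by (simp add: n_def)
  have n1: "n \<le> A * p + B * s * q" using m1 c by (simp add: n_def A_def B_def field_simps)
  have n2: "n \<le> A * s * p + B * q" using m2 c by (simp add: n_def A_def B_def field_simps)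
  have k1: "l2 - l1 * s \<ge> 0" and k2: "l1 - l2 * s \<ge> 0" using r1 r2 by (auto simp: mult.commute)
  have "(1 - s) * (l1 + l2) * n = (l2 - l1 * s) * n + (l1 - l2 * s) * n" by (simp add: algebra_simps)
  also have "\<dots> \<le> (l2 - l1 * s) * (A * p + B * s * q) + (l1 - l2 * s) * (A * s * p + B * q)"
    using k1 k2 n1 n2 by (intro add_mono mult_left_mono) auto
  also have "\<dots> = (1 - s^2) * A * B * (B * p + A * q)"
    by (simp add: A2[symmetric] B2[symmetric] power2_eq_square algebra_simps)
  finally have ineq: "(1 - s) * (l1 + l2) * n \<le> (1 - s) * ((1 + s) * A * B * (B * p + A * q))"
    by (simp add: power2_eq_square algebra_simps)
  have n3: "n * (l1 + l2) \<le> (1 + s) * A * B * (B * p + A * q)"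
    using ineq s1 by (simp add: mult.commute mult.left_commute)
  have cs: "(B * p + A * q)^2 \<le> (l1 + l2) * P"
  proof -
    have "(B * p + A * q)^2 \<le> (B^2 + A^2) * (p^2 + q^2)"
      by (rule cs2)
    also have "\<dots> \<le> (l1 + l2) * P" using pq A2 B2 l1 l2 by (simp add: add.commute mult_left_mono)
    finally show ?thesis .
  qed
  have "(n * (l1 + l2))^2 \<le> ((1 + s) * A * B * (B * p + A * q))^2"
    using n3 n0 l1 l2 by (intro power_mono) auto
  also have "\<dots> = (1 + s)^2 * l1 * l2 * (B * p + A * q)^2"
    by (simp add: power_mult_distrib A2 B2)
  also have "\<dots> \<le> (1 + s)^2 * l1 * l2 * ((l1 + l2) * P)"
    using cs l1 l2 by (intro mult_left_mono) auto
  finally have "n^2 * (l1 + l2)^2 \<le> (1 + s)^2 * l1 * l2 * P * (l1 + l2)"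
    by (simp add: power_mult_distrib mult_ac)
  then have "n^2 * (l1 + l2) \<le> (1 + s)^2 * l1 * l2 * P"
    using l1 l2 by (simp add: power2_eq_square mult_ac)
  then have "n^2 \<le> (1 + s)^2 * l1 * l2 * P / (l1 + l2)"
    using l1 l2 by (simp add: field_simps)
  then have "m^2 * c^2 \<le> (1 + s)^2 * l1 * l2 * P / (l1 + l2)" unfolding n_def
    by (simp add: power_mult_distrib)
  moreover have c2: "c^2 > 0" using c by simp
  ultimately have "m^2 \<le> (1 + s)^2 * l1 * l2 * P / (l1 + l2) / c^2"
    by (simp only: pos_le_divide_eq[OF c2])
  also have "\<dots> = P * l1 * l2 / (l1 + l2) * (1 + s)^2 / c^2"
    by (simp add: mult.commute mult.left_commute divide_inverse)
  finally show ?thesis .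
qed

locale twod =
  fixes a1 b1 a2 b2 :: complex and l1 l2 \<alpha> :: real
  assumes l1: "l1 > 0" and l2: "l2 > 0"
    and E00: "a1 * cnj a1 - a2 * cnj a2 = complex_of_real l1"
    and E11: "b1 * cnj b1 - b2 * cnj b2 = - complex_of_real l2"
    and E01: "a1 * cnj b1 - a2 * cnj b2 = 0"
    and alpha: "a2 \<noteq> 0 \<longrightarrow> \<alpha> = Arg a2 - Arg b2"
begin

definition "c = cos (arccos (sqrt l1 / cmod a1))"
definition "s = sin (arccos (sqrt l1 / cmod a1))"

lemma mods: "(cmod a1)^2 - (cmod a2)^2 = l1" "(cmod b2)^2 - (cmod b1)^2 = l2"
  "cmod a1 * cmod b1 = cmod a2 * cmod b2"
proof -
  have "complex_of_real ((cmod a1)^2 - (cmod a2)^2) = complex_of_real l1"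
    using E00 by (simp only: of_real_diff complex_norm_square)
  then show "(cmod a1)^2 - (cmod a2)^2 = l1" using of_real_eq_iff by blast
  have "complex_of_real ((cmod b1)^2 - (cmod b2)^2) = complex_of_real (- l2)"
    using E11 by (simp only: of_real_diff of_real_minus complex_norm_square)
  then have "(cmod b1)^2 - (cmod b2)^2 = - l2" by (rule of_real_eq_iff[THEN iffD1])
  then show "(cmod b2)^2 - (cmod b1)^2 = l2" by linarith
  have "a1 * cnj b1 = a2 * cnj b2" using E01 by simp
  then have "cmod (a1 * cnj b1) = cmod (a2 * cnj b2)" by simp
  then show "cmod a1 * cmod b1 = cmod a2 * cmod b2" by (simp add: norm_mult)
qed

lemma a1_pos: "cmod a1 \<ge> sqrt l1" "cmod a1 > 0"
proof -
  have "(cmod a1)^2 \<ge> l1" using mods(1) zero_le_power2[of "cmod a2"] by linarith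
  then show "cmod a1 \<ge> sqrt l1" by (simp add: real_le_lsqrt)
  then show "cmod a1 > 0" using l1 real_sqrt_gt_zero[of l1] by linarith
qed

lemma cs: "c = sqrt l1 / cmod a1" "s = sqrt (1 - c^2)" "c > 0" "s \<ge> 0" "s < 1" "s^2 + c^2 = 1"
proof -
  have y0: "sqrt l1 / cmod a1 > 0" using a1_pos l1 by simp
  have y1: "sqrt l1 / cmod a1 \<le> 1" using a1_pos by simp
  show c: "c = sqrt l1 / cmod a1" unfolding c_def using y0 y1 by (simp add: cos_arccos)
  show "s = sqrt (1 - c^2)" unfolding s_def c using y0 y1 by (simp add: sin_arccos)
  show cp: "c > 0" using c y0 by simp
  have c1: "c^2 \<le> 1" using c y1 y0 by (simp add: power_le_one)
  show "s \<ge> 0" using \<open>s = sqrt (1 - c^2)\<close> c1 by simp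
  have "1 - c^2 < 1" using cp by simp
  then show "s < 1" using \<open>s = sqrt (1 - c^2)\<close> c1 by (simp add: real_sqrt_lt_1_iff)
  show "s^2 + c^2 = 1" using \<open>s = sqrt (1 - c^2)\<close> c1 by simp
qed

lemma mags: "cmod a1 = sqrt l1 / c" "cmod a2 = sqrt l1 * s / c"
  "cmod b2 = sqrt l2 / c" "cmod b1 = sqrt l2 * s / c"
proof -
  have cnz: "c \<noteq> 0" using cs(3) by simp
  have "cmod a1 * c = sqrt l1" using cs(1) a1_pos(2) by (simp add: field_simps)
  then show A1: "cmod a1 = sqrt l1 / c" using cnz by (simp add: eq_divide_eq)
  have "(cmod a2)^2 = (cmod a1)^2 - l1" using mods by simp
  also have "\<dots> = l1 / c^2 - l1" using A1 l1 by (simp add: power_divide)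
  also have "\<dots> = l1 * (1 - c^2) / c^2" using cnz by (simp add: field_simps)
  also have "\<dots> = (sqrt l1 * s / c)^2" using cs(6) l1
    by (simp add: power_mult_distrib power_divide eq_diff_eq[symmetric])
  finally show A2: "cmod a2 = sqrt l1 * s / c" using cs
    by (metis norm_ge_zero divide_nonneg_pos mult_nonneg_nonneg real_sqrt_ge_0_iff less_imp_le l1 power2_eq_iff_nonneg)
  have "sqrt l1 / c * cmod b1 = sqrt l1 * s / c * cmod b2" using mods(3) unfolding A1 A2 .
  then have "sqrt l1 / c * cmod b1 = sqrt l1 / c * (s * cmod b2)" by (simp add: mult_ac)
  then have B1: "cmod b1 = s * cmod b2" using cnz l1 by simp
  have e1: "(cmod b1)^2 = s^2 * (cmod b2)^2" using B1 by (simp add: power_mult_distrib)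
  have e2: "c^2 = 1 - s^2" using cs(6) by simp
  have "(cmod b2)^2 * c^2 = l2" unfolding e2 using mods(2) e1 by (simp add: algebra_simps)
  then have "(cmod b2)^2 = (sqrt l2 / c)^2" using cnz l2 by (simp add: power_divide eq_divide_eq)
  then show B2: "cmod b2 = sqrt l2 / c" using cs l2
    by (metis norm_ge_zero divide_nonneg_pos real_sqrt_ge_0_iff less_imp_le power2_eq_iff_nonneg)
  show "cmod b1 = sqrt l2 * s / c" using B1 B2 by simp
qed


abbreviation "\<beta> \<equiv> Arg a1"
abbreviation "\<gamma> \<equiv> Arg b2"

lemma pa1: "cnj a1 * cis \<beta> = complex_of_real (cmod a1)"
  by (simp add: rcis_cnj cis_rcis_eq rcis_mult rcis_zero_arg del: rcis_def)

lemma pb2: "cnj b2 * cis (\<beta> - \<alpha>) = complex_of_real (cmod b2) * cis (\<beta> - \<alpha> - \<gamma>)"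
  by (simp add: rcis_cnj cis_rcis_eq rcis_mult del: rcis_def) (simp add: rcis_def)

lemma pa2: "cnj a2 * cis \<beta> = complex_of_real (cmod a2) * cis (\<beta> - \<alpha> - \<gamma>)"
proof (cases "a2 = 0")
  case True then show ?thesis by simp
next
  case False
  then have "Arg a2 = \<alpha> + \<gamma>" using alpha by simp
  then show ?thesis
    by (simp add: rcis_cnj cis_rcis_eq rcis_mult del: rcis_def) (simp add: rcis_def algebra_simps)
qed

lemma pb1: "cnj b1 * cis (\<beta> - \<alpha>) = complex_of_real (cmod b1)"
proof (cases "b1 = 0")
  case True then show ?thesis by simp
next
  case False
  have a1nz: "a1 \<noteq> 0" using a1_pos by auto
  have "a1 * cnj b1 \<noteq> 0" using False a1nz by simp
  then have a2nz: "a2 \<noteq> 0" using E01 by auto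
  then have A: "Arg a2 = \<alpha> + \<gamma>" using alpha by simp
  have "cnj b1 = a2 * cnj b2 / a1" using E01 a1nz by (simp add: field_simps)
  also have "\<dots> = rcis (cmod a2) (\<alpha> + \<gamma>) * rcis (cmod b2) (- \<gamma>) / rcis (cmod a1) \<beta>"
    by (simp only: rcis_cmod_Arg rcis_cnj A[symmetric])
  also have "\<dots> = rcis (cmod a2 * cmod b2 / cmod a1) (\<alpha> - \<beta>)"
    by (simp only: rcis_mult rcis_divide) simp
  finally have "cnj b1 * cis (\<beta> - \<alpha>) = rcis (cmod a2 * cmod b2 / cmod a1) (\<alpha> - \<beta>) * rcis 1 (\<beta> - \<alpha>)"
    by (simp only: cis_rcis_eq)
  also have "\<dots> = complex_of_real (cmod a2 * cmod b2 / cmod a1)"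
    by (simp only: rcis_mult) (simp add: rcis_zero_arg del: rcis_def)
  also have "cmod a2 * cmod b2 / cmod a1 = cmod b1" using mods(3) a1nz by (simp add: field_simps)
  finally show ?thesis .
qed

lemma zvals:
  fixes \<omega> :: complex and X Y :: real
  shows "cnj a1 * (X * cis \<beta> * \<omega>) + cnj b1 * (Y * cis (\<beta> - \<alpha>) * \<omega>)
           = \<omega> * complex_of_real (cmod a1 * X + cmod b1 * Y)"
    and "cnj a2 * (X * cis \<beta> * \<omega>) + cnj b2 * (Y * cis (\<beta> - \<alpha>) * \<omega>)
           = \<omega> * cis (\<beta> - \<alpha> - \<gamma>) * complex_of_real (cmod a2 * X + cmod b2 * Y)"
proof -
  have "cnj a1 * (X * cis \<beta> * \<omega>) + cnj b1 * (Y * cis (\<beta> - \<alpha>) * \<omega>)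
     = \<omega> * X * (cnj a1 * cis \<beta>) + \<omega> * Y * (cnj b1 * cis (\<beta> - \<alpha>))" by (simp add: algebra_simps)
  also have "\<dots> = \<omega> * complex_of_real (cmod a1 * X + cmod b1 * Y)" unfolding pa1 pb1
    by (simp add: algebra_simps)
  finally show "cnj a1 * (X * cis \<beta> * \<omega>) + cnj b1 * (Y * cis (\<beta> - \<alpha>) * \<omega>)
           = \<omega> * complex_of_real (cmod a1 * X + cmod b1 * Y)" .
  have "cnj a2 * (X * cis \<beta> * \<omega>) + cnj b2 * (Y * cis (\<beta> - \<alpha>) * \<omega>)
     = \<omega> * X * (cnj a2 * cis \<beta>) + \<omega> * Y * (cnj b2 * cis (\<beta> - \<alpha>))" by (simp add: algebra_simps)
  also have "\<dots> = \<omega> * cis (\<beta> - \<alpha> - \<gamma>) * complex_of_real (cmod a2 * X + cmod b2 * Y)" unfolding pa2 pb2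
    by (simp add: algebra_simps)
  finally show "cnj a2 * (X * cis \<beta> * \<omega>) + cnj b2 * (Y * cis (\<beta> - \<alpha>) * \<omega>)
           = \<omega> * cis (\<beta> - \<alpha> - \<gamma>) * complex_of_real (cmod a2 * X + cmod b2 * Y)" .
qed


definition F :: "complex \<Rightarrow> complex \<Rightarrow> real" where
  "F x y = min ((cmod (cnj a1 * x + cnj b1 * y))^2) ((cmod (cnj a2 * x + cnj b2 * y))^2)"

lemma vals:
  fixes X Y :: real and \<omega> :: complex
  assumes X: "X \<ge> 0" and Y: "Y \<ge> 0" and w: "cmod \<omega> = 1"
  shows "cmod (cnj a1 * (X * cis \<beta> * \<omega>) + cnj b1 * (Y * cis (\<beta> - \<alpha>) * \<omega>))
           = (sqrt l1 * X + sqrt l2 * s * Y) / c"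
    and "cmod (cnj a2 * (X * cis \<beta> * \<omega>) + cnj b2 * (Y * cis (\<beta> - \<alpha>) * \<omega>))
           = (sqrt l1 * s * X + sqrt l2 * Y) / c"
proof -
  have n: "\<And>r. r \<ge> 0 \<Longrightarrow> cmod (\<omega> * complex_of_real r) = r" using w by (simp add: norm_mult)
  have n2: "\<And>r. r \<ge> 0 \<Longrightarrow> cmod (\<omega> * cis (\<beta> - \<alpha> - \<gamma>) * complex_of_real r) = r" using w by (simp add: norm_mult)
  have "cmod a1 * X + cmod b1 * Y \<ge> 0" using X Y by simp
  then show "cmod (cnj a1 * (X * cis \<beta> * \<omega>) + cnj b1 * (Y * cis (\<beta> - \<alpha>) * \<omega>))
           = (sqrt l1 * X + sqrt l2 * s * Y) / c"
    unfolding zvals(1) by (simp only: n) (simp add: mags add_divide_distrib)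
  have "cmod a2 * X + cmod b2 * Y \<ge> 0" using X Y by simp
  then show "cmod (cnj a2 * (X * cis \<beta> * \<omega>) + cnj b2 * (Y * cis (\<beta> - \<alpha>) * \<omega>))
           = (sqrt l1 * s * X + sqrt l2 * Y) / c"
    unfolding zvals(2) by (simp only: n2) (simp add: mags add_divide_distrib)
qed

lemma bnds:
  shows "cmod (cnj a1 * x + cnj b1 * y) \<le> (sqrt l1 * cmod x + sqrt l2 * s * cmod y) / c"
    and "cmod (cnj a2 * x + cnj b2 * y) \<le> (sqrt l1 * s * cmod x + sqrt l2 * cmod y) / c"
proof -
  have "cmod (cnj a1 * x + cnj b1 * y) \<le> cmod a1 * cmod x + cmod b1 * cmod y"
    by (metis complex_mod_cnj norm_mult norm_triangle_ineq)
  then show "cmod (cnj a1 * x + cnj b1 * y) \<le> (sqrt l1 * cmod x + sqrt l2 * s * cmod y) / c"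
    by (simp add: mags add_divide_distrib)
  have "cmod (cnj a2 * x + cnj b2 * y) \<le> cmod a2 * cmod x + cmod b2 * cmod y"
    by (metis complex_mod_cnj norm_mult norm_triangle_ineq)
  then show "cmod (cnj a2 * x + cnj b2 * y) \<le> (sqrt l1 * s * cmod x + sqrt l2 * cmod y) / c"
    by (simp add: mags add_divide_distrib)
qed

lemma upperA:
  assumes r1: "s * l2 \<le> l1" and r2: "s * l1 \<le> l2" and pq: "(cmod x)^2 + (cmod y)^2 \<le> P"
  shows "F x y \<le> P * l1 * l2 / (l1 + l2) * (1 + s)^2 / c^2"
proof -
  define m where "m = min (cmod (cnj a1 * x + cnj b1 * y)) (cmod (cnj a2 * x + cnj b2 * y))"
  have "F x y = m^2" unfolding F_def m_def by (simp add: min_def)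
  also have "m^2 \<le> P * l1 * l2 / (l1 + l2) * (1 + s)^2 / c^2"
    apply (rule R1[OF l1 l2 cs(4) cs(5) cs(3) r1 r2 norm_ge_zero norm_ge_zero pq])
    using bnds[of x y] by (auto simp: m_def)
  finally show ?thesis .
qed

lemma upperB1:
  assumes pq: "(cmod x)^2 + (cmod y)^2 \<le> P"
  shows "F x y \<le> P * (l1 + l2 * s^2) / c^2"
proof -
  have "F x y \<le> (cmod (cnj a1 * x + cnj b1 * y))^2" unfolding F_def by simp
  also have "\<dots> \<le> ((sqrt l1 * cmod x + sqrt l2 * s * cmod y) / c)^2"
    using bnds(1) by (intro power_mono) auto
  also have "\<dots> = (sqrt l1 * cmod x + (sqrt l2 * s) * cmod y)^2 / c^2" by (simp add: power_divide)
  also have "\<dots> \<le> ((sqrt l1)^2 + (sqrt l2 * s)^2) * ((cmod x)^2 + (cmod y)^2) / c^2"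
    by (intro divide_right_mono cs2) auto
  also have "\<dots> \<le> ((sqrt l1)^2 + (sqrt l2 * s)^2) * P / c^2"
    using pq by (intro divide_right_mono mult_left_mono) auto
  also have "\<dots> = P * (l1 + l2 * s^2) / c^2" using l1 l2 by (simp add: power_mult_distrib)
  finally show ?thesis .
qed

lemma upperB2:
  assumes pq: "(cmod x)^2 + (cmod y)^2 \<le> P"
  shows "F x y \<le> P * (l1 * s^2 + l2) / c^2"
proof -
  have "F x y \<le> (cmod (cnj a2 * x + cnj b2 * y))^2" unfolding F_def by simp
  also have "\<dots> \<le> ((sqrt l1 * s * cmod x + sqrt l2 * cmod y) / c)^2"
    using bnds(2) by (intro power_mono) auto
  also have "\<dots> = ((sqrt l1 * s) * cmod x + sqrt l2 * cmod y)^2 / c^2" by (simp add: power_divide)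
  also have "\<dots> \<le> ((sqrt l1 * s)^2 + (sqrt l2)^2) * ((cmod x)^2 + (cmod y)^2) / c^2"
    by (intro divide_right_mono cs2) auto
  also have "\<dots> \<le> ((sqrt l1 * s)^2 + (sqrt l2)^2) * P / c^2"
    using pq by (intro divide_right_mono mult_left_mono) auto
  also have "\<dots> = P * (l1 * s^2 + l2) / c^2" using l1 l2 by (simp add: power_mult_distrib)
  finally show ?thesis .
qed


lemma sq_l1: "sqrt l1 * sqrt l1 = l1" and sq_l2: "sqrt l2 * sqrt l2 = l2"
  using l1 l2 by auto

lemma valA:
  assumes P: "P > 0" and w: "cmod \<omega> = 1"
  defines "X \<equiv> sqrt (P * l2 / (l1 + l2))" and "Y \<equiv> sqrt (P * l1 / (l1 + l2))"
  shows "F (X * cis \<beta> * \<omega>) (Y * cis (\<beta> - \<alpha>) * \<omega>) = P * l1 * l2 / (l1 + l2) * (1 + s)^2 / c^2"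
    and "X^2 + Y^2 = P"
proof -
  have L: "l1 + l2 > 0" using l1 l2 by simp
  have X: "X = sqrt P * sqrt l2 / sqrt (l1 + l2)" unfolding X_def by (simp add: real_sqrt_mult real_sqrt_divide)
  have Y: "Y = sqrt P * sqrt l1 / sqrt (l1 + l2)" unfolding Y_def by (simp add: real_sqrt_mult real_sqrt_divide)
  have X0: "X \<ge> 0" and Y0: "Y \<ge> 0" using X Y P l1 l2 by auto
  define k where "k = sqrt P * sqrt l1 * sqrt l2 * (1 + s) / (sqrt (l1 + l2) * c)"
  have z1: "(sqrt l1 * X + sqrt l2 * s * Y) / c = k" unfolding X Y k_def using cs(3) L
    by (simp add: field_simps)
  have z2: "(sqrt l1 * s * X + sqrt l2 * Y) / c = k" unfolding X Y k_def using cs(3) L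
    by (simp add: field_simps)
  have "F (X * cis \<beta> * \<omega>) (Y * cis (\<beta> - \<alpha>) * \<omega>) = k^2"
    unfolding F_def vals[OF X0 Y0 w] z1 z2 by simp
  also have "k^2 = P * l1 * l2 / (l1 + l2) * (1 + s)^2 / c^2"
    unfolding k_def using P l1 l2 L by (simp add: power_divide power_mult_distrib)
  finally show "F (X * cis \<beta> * \<omega>) (Y * cis (\<beta> - \<alpha>) * \<omega>) = P * l1 * l2 / (l1 + l2) * (1 + s)^2 / c^2" .
  have "X^2 = P * l2 / (l1 + l2)" unfolding X_def using P l1 l2 by simp
  moreover have "Y^2 = P * l1 / (l1 + l2)" unfolding Y_def using P l1 l2 by simp
  moreover have "P * l2 / (l1 + l2) + P * l1 / (l1 + l2) = P * (l1 + l2) / (l1 + l2)"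
    by (simp add: add_divide_distrib[symmetric] algebra_simps)
  ultimately show "X^2 + Y^2 = P" using L by simp
qed

lemma valB1:
  assumes P: "P > 0" and w: "cmod \<omega> = 1" and r: "l1 / l2 < s"
  defines "D \<equiv> l1 + l2 * s^2"
  defines "X \<equiv> sqrt (P * l1 / D)" and "Y \<equiv> sqrt (P * l2 * s^2 / D)"
  shows "F (X * cis \<beta> * \<omega>) (Y * cis (\<beta> - \<alpha>) * \<omega>) = P * (l1 + l2 * s^2) / c^2"
    and "X^2 + Y^2 = P"
proof -
  have D: "D > 0" unfolding D_def using l1 l2 by (simp add: add_pos_nonneg)
  have X: "X = sqrt P * sqrt l1 / sqrt D" unfolding X_def by (simp add: real_sqrt_mult real_sqrt_divide)
  have Y: "Y = sqrt P * sqrt l2 * s / sqrt D" unfolding Y_def using cs(4)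
    by (simp add: real_sqrt_mult real_sqrt_divide)
  have X0: "X \<ge> 0" and Y0: "Y \<ge> 0" using X Y cs(4) P l1 l2 D by auto
  have z1: "(sqrt l1 * X + sqrt l2 * s * Y) / c = sqrt P * sqrt D / c"
  proof -
    have "sqrt l1 * X + sqrt l2 * s * Y = sqrt P * (sqrt l1 * sqrt l1 + sqrt l2 * sqrt l2 * s^2) / sqrt D"
      unfolding X Y by (rule alg1)
    also have "\<dots> = sqrt P * D / sqrt D" unfolding sq_l1 sq_l2 D_def ..
    also have "\<dots> = sqrt P * sqrt D" using D by (simp add: field_simps)
    finally show ?thesis by simp
  qed
  have z2: "(sqrt l1 * s * X + sqrt l2 * Y) / c = sqrt P * s * (l1 + l2) / (sqrt D * c)"
  proof -
    have "sqrt l1 * s * X + sqrt l2 * Y = sqrt P * s * (sqrt l1 * sqrt l1 + sqrt l2 * sqrt l2) / sqrt D"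
      unfolding X Y by (rule alg2)
    then show ?thesis unfolding sq_l1 sq_l2 by simp
  qed
  have key: "D \<le> s * (l1 + l2)"
  proof -
    have "l1 < s * l2" using r l2 by (simp add: field_simps)
    then have "0 \<le> (1 - s) * (s * l2 - l1)" using cs(5) by simp
    then show ?thesis unfolding D_def by (simp add: algebra_simps power2_eq_square)
  qed
  have "(sqrt P * sqrt D / c)^2 \<le> (sqrt P * s * (l1 + l2) / (sqrt D * c))^2"
  proof -
    have "sqrt D * sqrt D \<le> s * (l1 + l2)" using key D by simp
    then have "sqrt P * (sqrt D * sqrt D) \<le> sqrt P * (s * (l1 + l2))"
      using P by (intro mult_left_mono) auto
    then have "sqrt P * (sqrt D * sqrt D) / (sqrt D * c) \<le> sqrt P * (s * (l1 + l2)) / (sqrt D * c)"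
      using D cs(3) by (intro divide_right_mono) auto
    moreover have "sqrt P * (sqrt D * sqrt D) / (sqrt D * c) = sqrt P * sqrt D / c"
      using D by (intro alg3[symmetric]) auto
    ultimately have "sqrt P * sqrt D / c \<le> sqrt P * s * (l1 + l2) / (sqrt D * c)"
      by (simp add: mult.assoc)
    then show ?thesis using D cs(3) P by (intro power_mono) auto
  qed
  then have "F (X * cis \<beta> * \<omega>) (Y * cis (\<beta> - \<alpha>) * \<omega>) = (sqrt P * sqrt D / c)^2"
    unfolding F_def vals[OF X0 Y0 w] z1 z2 by simp
  also have "\<dots> = P * (l1 + l2 * s^2) / c^2" using P D by (simp add: power_divide power_mult_distrib D_def)
  finally show "F (X * cis \<beta> * \<omega>) (Y * cis (\<beta> - \<alpha>) * \<omega>) = P * (l1 + l2 * s^2) / c^2" .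
  have "X^2 = P * l1 / D" unfolding X_def using P l1 D by simp
  moreover have "Y^2 = P * (l2 * s^2) / D" unfolding Y_def using P l2 D by simp
  moreover have "P * l1 / D + P * (l2 * s^2) / D = P * D / D"
    unfolding D_def by (simp add: add_divide_distrib[symmetric] algebra_simps)
  ultimately show "X^2 + Y^2 = P" using D by simp
qed


lemma valB2:
  assumes P: "P > 0" and w: "cmod \<omega> = 1" and r: "l2 / l1 < s"
  defines "E \<equiv> l1 * s^2 + l2"
  defines "X \<equiv> sqrt (P * l1 / (l1 + l2 * (1 / s^2)))" and "Y \<equiv> sqrt (P * l2 / (l1 * s^2 + l2))"
  shows "F (X * cis \<beta> * \<omega>) (Y * cis (\<beta> - \<alpha>) * \<omega>) = P * (l1 * s^2 + l2) / c^2"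
    and "X^2 + Y^2 = P"
proof -
  have E: "E > 0" unfolding E_def using l1 l2 by (simp add: add_nonneg_pos)
  have sp: "s > 0" using r l1 l2 by (smt (verit) divide_pos_pos)
  have Xe: "P * l1 / (l1 + l2 * (1 / s^2)) = P * l1 * s^2 / E" unfolding E_def using sp
    by (simp add: field_simps)
  have X: "X = sqrt P * sqrt l1 * s / sqrt E" unfolding X_def Xe using sp
    by (simp add: real_sqrt_mult real_sqrt_divide)
  have Y: "Y = sqrt P * sqrt l2 / sqrt E" unfolding Y_def E_def by (simp add: real_sqrt_mult real_sqrt_divide)
  have X0: "X \<ge> 0" and Y0: "Y \<ge> 0" using X Y sp P l1 l2 E by auto
  have z2: "(sqrt l1 * s * X + sqrt l2 * Y) / c = sqrt P * sqrt E / c"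
  proof -
    have "sqrt l1 * s * X + sqrt l2 * Y = sqrt P * (sqrt l1 * sqrt l1 * s^2 + sqrt l2 * sqrt l2) / sqrt E"
      unfolding X Y by (rule alg5)
    also have "\<dots> = sqrt P * E / sqrt E" unfolding sq_l1 sq_l2 E_def ..
    also have "\<dots> = sqrt P * sqrt E" using E by (simp add: field_simps)
    finally show ?thesis by simp
  qed
  have z1: "(sqrt l1 * X + sqrt l2 * s * Y) / c = sqrt P * s * (l1 + l2) / (sqrt E * c)"
  proof -
    have "sqrt l1 * X + sqrt l2 * s * Y = sqrt P * s * (sqrt l1 * sqrt l1 + sqrt l2 * sqrt l2) / sqrt E"
      unfolding X Y by (rule alg4)
    then show ?thesis unfolding sq_l1 sq_l2 by simp
  qed
  have key: "E \<le> s * (l1 + l2)"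
  proof -
    have "l2 < s * l1" using r l1 by (simp add: field_simps)
    then have "0 \<le> (1 - s) * (s * l1 - l2)" using cs(5) by simp
    then show ?thesis unfolding E_def by (simp add: algebra_simps power2_eq_square)
  qed
  have "(sqrt P * sqrt E / c)^2 \<le> (sqrt P * s * (l1 + l2) / (sqrt E * c))^2"
  proof -
    have "sqrt E * sqrt E \<le> s * (l1 + l2)" using key E by simp
    then have "sqrt P * (sqrt E * sqrt E) \<le> sqrt P * (s * (l1 + l2))"
      using P by (intro mult_left_mono) auto
    then have "sqrt P * (sqrt E * sqrt E) / (sqrt E * c) \<le> sqrt P * (s * (l1 + l2)) / (sqrt E * c)"
      using E cs(3) by (intro divide_right_mono) auto
    moreover have "sqrt P * (sqrt E * sqrt E) / (sqrt E * c) = sqrt P * sqrt E / c"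
      using E by (intro alg3[symmetric]) auto
    ultimately have "sqrt P * sqrt E / c \<le> sqrt P * s * (l1 + l2) / (sqrt E * c)"
      by (simp add: mult.assoc)
    then show ?thesis using E cs(3) P by (intro power_mono) auto
  qed
  then have "F (X * cis \<beta> * \<omega>) (Y * cis (\<beta> - \<alpha>) * \<omega>) = (sqrt P * sqrt E / c)^2"
    unfolding F_def vals[OF X0 Y0 w] z1 z2 by simp
  also have "\<dots> = P * (l1 * s^2 + l2) / c^2" using P E by (simp add: power_divide power_mult_distrib E_def)
  finally show "F (X * cis \<beta> * \<omega>) (Y * cis (\<beta> - \<alpha>) * \<omega>) = P * (l1 * s^2 + l2) / c^2" .
  have "X^2 = P * l1 * s^2 / E" unfolding X_def Xe using P l1 E by simp
  moreover have "Y^2 = P * l2 / E" unfolding Y_def E_def[symmetric] using P l2 E by simp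
  moreover have "P * l1 * s^2 / E + P * l2 / E = P * E / E"
    unfolding E_def by (simp add: add_divide_distrib[symmetric] algebra_simps)
  ultimately show "X^2 + Y^2 = P" using E by simp
qed

end


lemma hprod_smult_r: "h \<in> carrier_vec n \<Longrightarrow> w \<in> carrier_vec n \<Longrightarrow> hprod h (k \<cdot>\<^sub>v w) = k * hprod h w"
  unfolding hprod_def by (simp add: sum_distrib_left mult_ac)

lemma hprod_smult_l: "h \<in> carrier_vec n \<Longrightarrow> w \<in> carrier_vec n \<Longrightarrow> hprod (k \<cdot>\<^sub>v h) w = cnj k * hprod h w"
  unfolding hprod_def by (simp add: sum_distrib_left mult_ac)

lemma hprod_swap: "h \<in> carrier_vec n \<Longrightarrow> w \<in> carrier_vec n \<Longrightarrow> hprod w h = cnj (hprod h w)"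
  unfolding hprod_def by (simp add: mult.commute)

lemma feas_norm: assumes "feasible M P u" shows "(vnorm u)^2 = P" "u \<in> carrier_vec M"
proof -
  have "complex_of_real ((vnorm u)^2) = complex_of_real P"
    using assms hprod_self(1)[of u M] unfolding feasible_def by simp
  then show "(vnorm u)^2 = P" by (rule of_real_eq_iff[THEN iffD1])
  show "u \<in> carrier_vec M" using assms unfolding feasible_def by simp
qed

lemma cmod_r2: "cmod (z * complex_of_real (r^2)) = cmod z * r^2"
  by (simp only: norm_mult norm_of_real) simp

lemma cmod_r2': "cmod (complex_of_real (r^2)) = r^2"
  by (simp only: norm_of_real) simp

lemma scale_vec:
  assumes h: "h \<in> carrier_vec M" and nz: "h \<noteq> 0\<^sub>v M" and P: "P > 0" and g: "g \<in> carrier_vec M"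
  defines "w \<equiv> complex_of_real (sqrt P / vnorm h) \<cdot>\<^sub>v h"
  shows "feasible M P w" and "(cmod (hprod g w))^2 = P * (cmod (hprod g h))^2 / (vnorm h)^2"
proof -
  have n: "vnorm h > 0" by (rule vnorm_pos[OF h nz])
  have wc: "w \<in> carrier_vec M" unfolding w_def using h by simp
  have "hprod w w = cnj (complex_of_real (sqrt P / vnorm h)) * (complex_of_real (sqrt P / vnorm h) * complex_of_real ((vnorm h)^2))"
    unfolding w_def hprod_smult_l[OF h smult_carrier_vec[THEN iffD2, OF h]] hprod_smult_r[OF h h] hprod_self(1)[OF h] ..
  also have "\<dots> = complex_of_real ((sqrt P / vnorm h) * (sqrt P / vnorm h) * (vnorm h)^2)"
    by (simp only: complex_cnj_complex_of_real of_real_mult mult.assoc)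
  also have "(sqrt P / vnorm h) * (sqrt P / vnorm h) * (vnorm h)^2 = P" using n P by (simp add: field_simps power2_eq_square)
  finally show "feasible M P w" unfolding feasible_def using wc by simp
  have "hprod g w = complex_of_real (sqrt P / vnorm h) * hprod g h" unfolding w_def
    by (rule hprod_smult_r[OF g h])
  then have "cmod (hprod g w) = \<bar>sqrt P / vnorm h\<bar> * cmod (hprod g h)"
    by (simp only: norm_mult norm_of_real)
  also have "\<bar>sqrt P / vnorm h\<bar> = sqrt P / vnorm h" using n P by simp
  finally have "(cmod (hprod g w))^2 = (sqrt P / vnorm h)^2 * (cmod (hprod g h))^2"
    by (simp only: power_mult_distrib)
  also have "\<dots> = P * (cmod (hprod g h))^2 / (vnorm h)^2" using P by (simp add: power_divide)
  finally show "(cmod (hprod g w))^2 = P * (cmod (hprod g h))^2 / (vnorm h)^2" .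
qed

lemma scen1:
  assumes h1: "h1 \<in> carrier_vec M" and h2: "h2 \<in> carrier_vec M"
    and n1: "h1 \<noteq> 0\<^sub>v M" and n2: "h2 \<noteq> 0\<^sub>v M" and P: "P > 0"
    and tau: "h1 = \<tau> \<cdot>\<^sub>v h2"
  shows "max_attained M P h1 h2
         (complex_of_real (sqrt P / vnorm h2) \<cdot>\<^sub>v h2)
         (min (P * (vnorm h1)\<^sup>2) (P * (vnorm h2)\<^sup>2))
     \<and> max_attained M P h1 h2
         (complex_of_real (sqrt P / vnorm h1) \<cdot>\<^sub>v h1)
         (min (P * (vnorm h1)\<^sup>2) (P * (vnorm h2)\<^sup>2))"
proof -
  have v1: "vnorm h1 > 0" and v2: "vnorm h2 > 0" using vnorm_pos h1 h2 n1 n2 by auto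
  have h12: "hprod h1 h2 = cnj \<tau> * complex_of_real ((vnorm h2)^2)"
    unfolding tau hprod_smult_l[OF h2 h2] hprod_self(1)[OF h2] ..
  have h21: "hprod h2 h1 = \<tau> * complex_of_real ((vnorm h2)^2)"
    unfolding tau hprod_smult_r[OF h2 h2] hprod_self(1)[OF h2] ..
  have h11: "complex_of_real ((vnorm h1)^2) = cnj \<tau> * \<tau> * complex_of_real ((vnorm h2)^2)"
    unfolding hprod_self(1)[OF h1, symmetric] unfolding tau
    hprod_smult_l[OF h2 smult_carrier_vec[THEN iffD2, OF h2]] hprod_smult_r[OF h2 h2] hprod_self(1)[OF h2] by simp
  have nn: "(vnorm h1)^2 = (cmod \<tau>)^2 * (vnorm h2)^2"
  proof -
    have "complex_of_real ((vnorm h1)^2) = complex_of_real ((cmod \<tau>)^2 * (vnorm h2)^2)"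
      unfolding h11 of_real_mult complex_norm_square by (simp only: ac_simps)
    then show ?thesis by (rule of_real_eq_iff[THEN iffD1])
  qed
  have tz: "\<tau> \<noteq> 0" using nn v1 by auto
  have c12: "(cmod (hprod h1 h2))^2 = (cmod \<tau>)^2 * (vnorm h2)^4"
    unfolding h12 cmod_r2 complex_mod_cnj by (simp add: power_mult_distrib flip: power_mult)
  have c21: "(cmod (hprod h2 h1))^2 = (cmod \<tau>)^2 * (vnorm h2)^4"
    unfolding h21 cmod_r2 by (simp add: power_mult_distrib flip: power_mult)
  have c11: "(cmod (hprod h1 h1))^2 = (vnorm h1)^4" unfolding hprod_self(1)[OF h1] cmod_r2'
    by (simp flip: power_mult)
  have c22: "(cmod (hprod h2 h2))^2 = (vnorm h2)^4" unfolding hprod_self(1)[OF h2] cmod_r2'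
    by (simp flip: power_mult)
  have upper: "\<forall>u. feasible M P u \<longrightarrow> fobj h1 h2 u \<le> min (P * (vnorm h1)\<^sup>2) (P * (vnorm h2)\<^sup>2)"
  proof (intro allI impI)
    fix u assume f: "feasible M P u"
    have u: "u \<in> carrier_vec M" and un: "(vnorm u)^2 = P" using feas_norm[OF f] by auto
    have "(cmod (hprod h1 u))^2 \<le> P * (vnorm h1)^2" using hprod_cs[OF h1 u] un by (simp add: mult.commute)
    moreover have "(cmod (hprod h2 u))^2 \<le> P * (vnorm h2)^2" using hprod_cs[OF h2 u] un by (simp add: mult.commute)
    ultimately show "fobj h1 h2 u \<le> min (P * (vnorm h1)\<^sup>2) (P * (vnorm h2)\<^sup>2)"
      unfolding fobj_def by (rule min.mono)
  qed
  have a1: "fobj h1 h2 (complex_of_real (sqrt P / vnorm h2) \<cdot>\<^sub>v h2) = min (P * (vnorm h1)\<^sup>2) (P * (vnorm h2)\<^sup>2)"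
  proof -
    have "(cmod (hprod h1 (complex_of_real (sqrt P / vnorm h2) \<cdot>\<^sub>v h2)))^2 = P * (vnorm h1)^2"
      unfolding scale_vec(2)[OF h2 n2 P h1] c12 nn using v2 by (simp add: power2_eq_square power4_eq_xxxx)
    moreover have "(cmod (hprod h2 (complex_of_real (sqrt P / vnorm h2) \<cdot>\<^sub>v h2)))^2 = P * (vnorm h2)^2"
      unfolding scale_vec(2)[OF h2 n2 P h2] c22 using v2 by (simp add: power2_eq_square power4_eq_xxxx)
    ultimately show ?thesis unfolding fobj_def by simp
  qed
  have a2: "fobj h1 h2 (complex_of_real (sqrt P / vnorm h1) \<cdot>\<^sub>v h1) = min (P * (vnorm h1)\<^sup>2) (P * (vnorm h2)\<^sup>2)"
  proof -
    have "(cmod (hprod h1 (complex_of_real (sqrt P / vnorm h1) \<cdot>\<^sub>v h1)))^2 = P * (vnorm h1)^2"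
      unfolding scale_vec(2)[OF h1 n1 P h1] c11 using v1 by (simp add: power2_eq_square power4_eq_xxxx)
    moreover have "(cmod (hprod h2 (complex_of_real (sqrt P / vnorm h1) \<cdot>\<^sub>v h1)))^2 = P * (vnorm h2)^2"
      unfolding scale_vec(2)[OF h1 n1 P h2] c21 nn using v1 v2 nn tz
      by (simp add: power2_eq_square power4_eq_xxxx)
    ultimately show ?thesis unfolding fobj_def by simp
  qed
  show ?thesis unfolding max_attained_def using a1 a2 upper scale_vec(1)[OF h1 n1 P h1] scale_vec(1)[OF h2 n2 P h2]
    by blast
qed



lemma sum2:
  fixes M :: nat
  assumes "2 \<le> M" "\<And>i. 2 \<le> i \<Longrightarrow> i < M \<Longrightarrow> f i = 0"
  shows "(\<Sum>i<M. f i) = f 0 + (f 1 :: 'a :: comm_monoid_add)"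
proof -
  have "(\<Sum>i<M. f i) = (\<Sum>i\<in>{0,1}. f i)"
    by (rule sum.mono_neutral_right) (use assms in auto)
  then show ?thesis by simp
qed

lemma scen2:
  fixes M :: nat and h1 h2 :: "complex vec" and P :: real
    and V :: "complex mat" and l1 l2 \<alpha> :: real
  assumes h1_dim: "h1 \<in> carrier_vec M" and h2_dim: "h2 \<in> carrier_vec M"
    and h1_nz: "h1 \<noteq> 0\<^sub>v M" and P_pos: "P > 0"
    and ind: "\<forall>a b :: complex. a \<cdot>\<^sub>v h1 + b \<cdot>\<^sub>v h2 = 0\<^sub>v M \<longrightarrow> a = 0 \<and> b = 0"
    and U: "unitary_mat M V" and l1: "l1 > 0" and l2: "l2 > 0"
    and dec: "outer h1 - outer h2 = V * Sigma_mat M l1 l2 * mat_adjoint V"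
    and al: "(let t21 = (mat_adjoint V *\<^sub>v h2) $ 0; t22 = (mat_adjoint V *\<^sub>v h2) $ 1
          in t21 \<noteq> 0 \<longrightarrow> \<alpha> = Arg t21 - Arg t22)"
  shows
       "(let t1 = mat_adjoint V *\<^sub>v h1; t2 = mat_adjoint V *\<^sub>v h2;
            \<theta> = arccos (sqrt l1 / cmod (t1 $ 0));
            \<beta> = Arg (t1 $ 0); \<gamma> = Arg (t2 $ 1);
            s = sin \<theta>; c = cos \<theta>;
            e = (\<lambda>x::real. cis x)
        in
        (l1 \<le> l2 \<and> 0 \<le> s \<and> s \<le> l1 / l2 \<longrightarrow>
           max_attained M P h1 h2
             (V *\<^sub>v vec2 M (complex_of_real (sqrt (P * l2 / (l1 + l2))) * e \<beta>)
                             (complex_of_real (sqrt (P * l1 / (l1 + l2))) * e (\<beta> - \<alpha>)))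
             (P * l1 * l2 / (l1 + l2) * (1 + s)\<^sup>2 / c\<^sup>2))
      \<and> (l1 \<le> l2 \<and> l1 / l2 < s \<and> s < 1 \<longrightarrow>
           max_attained M P h1 h2
             (V *\<^sub>v vec2 M (complex_of_real (sqrt (P * l1 / (l1 + l2 * s\<^sup>2))) * e \<beta>)
                             (complex_of_real (sqrt (P * l2 * s\<^sup>2 / (l1 + l2 * s\<^sup>2))) * e (\<beta> - \<alpha>)))
             (P * (l1 + l2 * s\<^sup>2) / c\<^sup>2))
      \<and> (l1 > l2 \<and> 0 \<le> s \<and> s \<le> l2 / l1 \<longrightarrow>
           max_attained M P h1 h2
             (V *\<^sub>v vec2 M (complex_of_real (sqrt (P * l2 / (l1 + l2))) * e (\<gamma> + \<alpha>))
                             (complex_of_real (sqrt (P * l1 / (l1 + l2))) * e \<gamma>))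
             (P * l1 * l2 / (l1 + l2) * (1 + s)\<^sup>2 / c\<^sup>2))
      \<and> (l1 > l2 \<and> l2 / l1 < s \<and> s < 1 \<longrightarrow>
           max_attained M P h1 h2
             (V *\<^sub>v vec2 M (complex_of_real (sqrt (P * l1 / (l1 + l2 * (1 / s\<^sup>2)))) * e (\<gamma> + \<alpha>))
                             (complex_of_real (sqrt (P * l2 / (l1 * s\<^sup>2 + l2))) * e \<gamma>))
             (P * (l1 * s\<^sup>2 + l2) / c\<^sup>2)))"
proof -
  have M2: "M \<ge> 2" by (rule M2[OF h1_dim h2_dim h1_nz ind])
  have V: "V \<in> carrier_mat M M" and VhV: "mat_adjoint V * V = 1\<^sub>m M"
    and VVh: "V * mat_adjoint V = 1\<^sub>m M" using U unfolding unitary_mat_def by auto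
  have Vh: "mat_adjoint V \<in> carrier_mat M M" using adj_carrier[OF V] .
  define t1 where "t1 = mat_adjoint V *\<^sub>v h1"
  define t2 where "t2 = mat_adjoint V *\<^sub>v h2"
  have t1c: "t1 \<in> carrier_vec M" and t2c: "t2 \<in> carrier_vec M"
    unfolding t1_def t2_def using Vh h1_dim h2_dim by auto
  have Sc: "Sigma_mat M l1 l2 \<in> carrier_mat M M" unfolding Sigma_mat_def by simp
  have SS: "mat_adjoint V * (outer h1 - outer h2) * V = Sigma_mat M l1 l2"
    unfolding dec by (rule sandwich[OF U Sc])
  have ent: "t1 $ i * cnj (t1 $ k) - t2 $ i * cnj (t2 $ k) = Sigma_mat M l1 l2 $$ (i, k)"
    if "i < M" "k < M" for i k
    using conj_outer[OF V h1_dim h2_dim that] unfolding SS t1_def t2_def by simp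
  have E00: "t1 $ 0 * cnj (t1 $ 0) - t2 $ 0 * cnj (t2 $ 0) = complex_of_real l1"
    using ent[of 0 0] M2 unfolding Sigma_mat_def by simp
  have E11: "t1 $ 1 * cnj (t1 $ 1) - t2 $ 1 * cnj (t2 $ 1) = - complex_of_real l2"
    using ent[of 1 1] M2 unfolding Sigma_mat_def by simp
  have E01: "t1 $ 0 * cnj (t1 $ 1) - t2 $ 0 * cnj (t2 $ 1) = 0"
    using ent[of 0 1] M2 unfolding Sigma_mat_def by simp
  have alpha: "t2 $ 0 \<noteq> 0 \<longrightarrow> \<alpha> = Arg (t2 $ 0) - Arg (t2 $ 1)"
    using al unfolding Let_def t2_def .
  interpret T: twod "t1 $ 0" "t1 $ 1" "t2 $ 0" "t2 $ 1" l1 l2 \<alpha>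
    by unfold_locales (use l1 l2 E00 E11 E01 alpha in auto)
  have zeros: "t1 $ i = 0 \<and> t2 $ i = 0" if "2 \<le> i" "i < M" for i
  proof (rule kill[OF l1 l2 E00 E11 E01])
    show "t1 $ i * cnj (t1 $ 0) - t2 $ i * cnj (t2 $ 0) = 0"
      using ent[of i 0] that unfolding Sigma_mat_def by simp
    show "t1 $ i * cnj (t1 $ 1) - t2 $ i * cnj (t2 $ 1) = 0"
      using ent[of i 1] that unfolding Sigma_mat_def by simp
  qed
  have hp1: "hprod h1 (V *\<^sub>v g) = cnj (t1 $ 0) * g $ 0 + cnj (t1 $ 1) * g $ 1"
    if g: "g \<in> carrier_vec M" for g
  proof -
    have "hprod h1 (V *\<^sub>v g) = hprod t1 g" unfolding t1_def by (rule hprod_mult[OF V h1_dim g])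
    also have "\<dots> = (\<Sum>i<M. cnj (t1 $ i) * g $ i)" unfolding hprod_def using t1c by simp
    also have "\<dots> = cnj (t1 $ 0) * g $ 0 + cnj (t1 $ 1) * g $ 1"
      by (rule sum2[OF M2]) (use zeros in auto)
    finally show ?thesis .
  qed
  have hp2: "hprod h2 (V *\<^sub>v g) = cnj (t2 $ 0) * g $ 0 + cnj (t2 $ 1) * g $ 1"
    if g: "g \<in> carrier_vec M" for g
  proof -
    have "hprod h2 (V *\<^sub>v g) = hprod t2 g" unfolding t2_def by (rule hprod_mult[OF V h2_dim g])
    also have "\<dots> = (\<Sum>i<M. cnj (t2 $ i) * g $ i)" unfolding hprod_def using t2c by simp
    also have "\<dots> = cnj (t2 $ 0) * g $ 0 + cnj (t2 $ 1) * g $ 1"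
      by (rule sum2[OF M2]) (use zeros in auto)
    finally show ?thesis .
  qed
  have fobV: "fobj h1 h2 (V *\<^sub>v g) = T.F (g $ 0) (g $ 1)" if g: "g \<in> carrier_vec M" for g
    unfolding fobj_def T.F_def hp1[OF g] hp2[OF g] ..
  have upperU: "(cmod ((mat_adjoint V *\<^sub>v u) $ 0))^2 + (cmod ((mat_adjoint V *\<^sub>v u) $ 1))^2 \<le> P
      \<and> fobj h1 h2 u = T.F ((mat_adjoint V *\<^sub>v u) $ 0) ((mat_adjoint V *\<^sub>v u) $ 1)"
    if f: "feasible M P u" for u
  proof -
    define g where "g = mat_adjoint V *\<^sub>v u"
    have u: "u \<in> carrier_vec M" and uu: "hprod u u = complex_of_real P" using f unfolding feasible_def by auto
    have gc: "g \<in> carrier_vec M" unfolding g_def using Vh u by simp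
    have ug: "u = V *\<^sub>v g" unfolding g_def
      using assoc_mult_mat_vec[OF V Vh u] VVh u by simp
    have h1: "hprod u (V *\<^sub>v g) = hprod g g"
      using hprod_mult[OF V u gc] unfolding g_def[symmetric] .
    have h2: "hprod u u = hprod u (V *\<^sub>v g)" by (simp only: ug[symmetric])
    have "hprod g g = hprod u u" using h1 h2 by simp
    then have "complex_of_real ((vnorm g)^2) = complex_of_real P" using hprod_self(1)[OF gc] uu by simp
    then have gn: "(vnorm g)^2 = P" by (rule of_real_eq_iff[THEN iffD1])
    have "(cmod (g $ 0))^2 + (cmod (g $ 1))^2 = (\<Sum>i\<in>{0,1}. (cmod (g $ i))^2)" by simp
    also have "\<dots> \<le> (\<Sum>i<M. (cmod (g $ i))^2)" using M2 by (intro sum_mono2) auto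
    also have "\<dots> = P" using hprod_self(2)[OF gc] gn by simp
    finally have "(cmod (g $ 0))^2 + (cmod (g $ 1))^2 \<le> P" .
    moreover have "fobj h1 h2 u = T.F (g $ 0) (g $ 1)" using fobV[OF gc] ug by simp
    ultimately show ?thesis unfolding g_def by simp
  qed
  have feasV: "feasible M P (V *\<^sub>v vec2 M x y)" if xy: "(cmod x)^2 + (cmod y)^2 = P" for x y
  proof -
    define g where "g = vec2 M x y"
    have gc: "g \<in> carrier_vec M" unfolding g_def vec2_def by simp
    have Vg: "V *\<^sub>v g \<in> carrier_vec M" using V gc by simp
    have "hprod (V *\<^sub>v g) (V *\<^sub>v g) = hprod (mat_adjoint V *\<^sub>v (V *\<^sub>v g)) g"
      by (rule hprod_mult[OF V Vg gc])
    also have "mat_adjoint V *\<^sub>v (V *\<^sub>v g) = g"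
      using assoc_mult_mat_vec[OF Vh V gc] VhV gc by simp
    also have "hprod g g = (\<Sum>i<M. cnj (g $ i) * g $ i)" unfolding hprod_def using gc by simp
    also have "\<dots> = cnj (g $ 0) * g $ 0 + cnj (g $ 1) * g $ 1"
      by (rule sum2[OF M2]) (auto simp: g_def vec2_def)
    also have "\<dots> = complex_of_real ((cmod x)^2 + (cmod y)^2)"
      using M2 unfolding g_def vec2_def of_real_add complex_norm_square by (simp add: mult.commute)
    finally show ?thesis unfolding feasible_def g_def using Vg xy g_def by simp
  qed
  have attain: "max_attained M P h1 h2 (V *\<^sub>v vec2 M x y) v"
    if xy: "(cmod x)^2 + (cmod y)^2 = P" and Fv: "T.F x y = v"
      and ub: "\<And>x' y'. (cmod x')^2 + (cmod y')^2 \<le> P \<Longrightarrow> T.F x' y' \<le> v" for x y v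
  proof -
    have gc: "vec2 M x y \<in> carrier_vec M" unfolding vec2_def by simp
    have "fobj h1 h2 (V *\<^sub>v vec2 M x y) = v" using fobV[OF gc] M2 Fv unfolding vec2_def by simp
    moreover have "\<forall>u. feasible M P u \<longrightarrow> fobj h1 h2 u \<le> v" using upperU ub by metis
    ultimately show ?thesis unfolding max_attained_def using feasV[OF xy] by simp
  qed
  define \<beta> where "\<beta> = Arg (t1 $ 0)"
  define \<gamma> where "\<gamma> = Arg (t2 $ 1)"
  have w1: "cis \<beta> * cis (\<gamma> + \<alpha> - \<beta>) = cis (\<gamma> + \<alpha>)" by (simp add: cis_mult algebra_simps)
  have w2: "cis (\<beta> - \<alpha>) * cis (\<gamma> + \<alpha> - \<beta>) = cis \<gamma>" by (simp add: cis_mult algebra_simps)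
  have wn: "cmod (cis (\<gamma> + \<alpha> - \<beta>)) = 1" by simp
  have cm: "cmod (complex_of_real r * cis t) = \<bar>r\<bar>" for r t by (simp add: norm_mult)
  have C1: "l1 \<le> l2 \<and> 0 \<le> T.s \<and> T.s \<le> l1 / l2 \<longrightarrow>
           max_attained M P h1 h2
             (V *\<^sub>v vec2 M (complex_of_real (sqrt (P * l2 / (l1 + l2))) * cis \<beta>)
                             (complex_of_real (sqrt (P * l1 / (l1 + l2))) * cis (\<beta> - \<alpha>)))
             (P * l1 * l2 / (l1 + l2) * (1 + T.s)\<^sup>2 / T.c\<^sup>2)"
  proof
    assume a: "l1 \<le> l2 \<and> 0 \<le> T.s \<and> T.s \<le> l1 / l2"
    have r1: "T.s * l2 \<le> l1" using a pos_le_divide_eq[OF l2] by blast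
    have "T.s * l1 \<le> 1 * l1" by (rule mult_right_mono) (use T.cs(5) l1 in auto)
    then have r2: "T.s * l1 \<le> l2" using a by linarith
    show "max_attained M P h1 h2
             (V *\<^sub>v vec2 M (complex_of_real (sqrt (P * l2 / (l1 + l2))) * cis \<beta>)
                             (complex_of_real (sqrt (P * l1 / (l1 + l2))) * cis (\<beta> - \<alpha>)))
             (P * l1 * l2 / (l1 + l2) * (1 + T.s)\<^sup>2 / T.c\<^sup>2)"
    proof (rule attain)
      show "(cmod (complex_of_real (sqrt (P * l2 / (l1 + l2))) * cis \<beta>))\<^sup>2 +
        (cmod (complex_of_real (sqrt (P * l1 / (l1 + l2))) * cis (\<beta> - \<alpha>)))\<^sup>2 = P"
        unfolding cm power2_abs by (rule T.valA(2)[OF P_pos norm_one])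
      show "T.F (complex_of_real (sqrt (P * l2 / (l1 + l2))) * cis \<beta>)
                (complex_of_real (sqrt (P * l1 / (l1 + l2))) * cis (\<beta> - \<alpha>)) =
             P * l1 * l2 / (l1 + l2) * (1 + T.s)\<^sup>2 / T.c\<^sup>2"
        using T.valA(1)[OF P_pos norm_one] unfolding \<beta>_def by (simp only: mult_1_right)
    qed (rule T.upperA[OF r1 r2])
  qed
  have C2: "l1 \<le> l2 \<and> l1 / l2 < T.s \<and> T.s < 1 \<longrightarrow>
           max_attained M P h1 h2
             (V *\<^sub>v vec2 M (complex_of_real (sqrt (P * l1 / (l1 + l2 * T.s\<^sup>2))) * cis \<beta>)
                             (complex_of_real (sqrt (P * l2 * T.s\<^sup>2 / (l1 + l2 * T.s\<^sup>2))) * cis (\<beta> - \<alpha>)))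
             (P * (l1 + l2 * T.s\<^sup>2) / T.c\<^sup>2)"
  proof
    assume a: "l1 \<le> l2 \<and> l1 / l2 < T.s \<and> T.s < 1"
    then have r: "l1 / l2 < T.s" by simp
    show "max_attained M P h1 h2
             (V *\<^sub>v vec2 M (complex_of_real (sqrt (P * l1 / (l1 + l2 * T.s\<^sup>2))) * cis \<beta>)
                             (complex_of_real (sqrt (P * l2 * T.s\<^sup>2 / (l1 + l2 * T.s\<^sup>2))) * cis (\<beta> - \<alpha>)))
             (P * (l1 + l2 * T.s\<^sup>2) / T.c\<^sup>2)"
    proof (rule attain)
      show "(cmod (complex_of_real (sqrt (P * l1 / (l1 + l2 * T.s\<^sup>2))) * cis \<beta>))\<^sup>2 +
        (cmod (complex_of_real (sqrt (P * l2 * T.s\<^sup>2 / (l1 + l2 * T.s\<^sup>2))) * cis (\<beta> - \<alpha>)))\<^sup>2 = P"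
        unfolding cm power2_abs by (rule T.valB1(2)[OF P_pos norm_one r])
      show "T.F (complex_of_real (sqrt (P * l1 / (l1 + l2 * T.s\<^sup>2))) * cis \<beta>)
                (complex_of_real (sqrt (P * l2 * T.s\<^sup>2 / (l1 + l2 * T.s\<^sup>2))) * cis (\<beta> - \<alpha>)) =
             P * (l1 + l2 * T.s\<^sup>2) / T.c\<^sup>2"
        using T.valB1(1)[OF P_pos norm_one r] unfolding \<beta>_def by (simp only: mult_1_right)
    qed (rule T.upperB1)
  qed
  have C3: "l1 > l2 \<and> 0 \<le> T.s \<and> T.s \<le> l2 / l1 \<longrightarrow>
           max_attained M P h1 h2
             (V *\<^sub>v vec2 M (complex_of_real (sqrt (P * l2 / (l1 + l2))) * cis (\<gamma> + \<alpha>))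
                             (complex_of_real (sqrt (P * l1 / (l1 + l2))) * cis \<gamma>))
             (P * l1 * l2 / (l1 + l2) * (1 + T.s)\<^sup>2 / T.c\<^sup>2)"
  proof
    assume a: "l1 > l2 \<and> 0 \<le> T.s \<and> T.s \<le> l2 / l1"
    have r2: "T.s * l1 \<le> l2" using a pos_le_divide_eq[OF l1] by blast
    have "T.s * l2 \<le> 1 * l2" by (rule mult_right_mono) (use T.cs(5) l2 in auto)
    then have r1: "T.s * l2 \<le> l1" using a by linarith
    have F: "T.F (complex_of_real X * cis (\<gamma> + \<alpha>)) (complex_of_real Y * cis \<gamma>)
        = T.F (complex_of_real X * cis \<beta> * cis (\<gamma> + \<alpha> - \<beta>)) (complex_of_real Y * cis (\<beta> - \<alpha>) * cis (\<gamma> + \<alpha> - \<beta>))"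
      for X Y by (simp only: mult.assoc w1 w2)
    show "max_attained M P h1 h2
             (V *\<^sub>v vec2 M (complex_of_real (sqrt (P * l2 / (l1 + l2))) * cis (\<gamma> + \<alpha>))
                             (complex_of_real (sqrt (P * l1 / (l1 + l2))) * cis \<gamma>))
             (P * l1 * l2 / (l1 + l2) * (1 + T.s)\<^sup>2 / T.c\<^sup>2)"
    proof (rule attain)
      show "(cmod (complex_of_real (sqrt (P * l2 / (l1 + l2))) * cis (\<gamma> + \<alpha>)))\<^sup>2 +
        (cmod (complex_of_real (sqrt (P * l1 / (l1 + l2))) * cis \<gamma>))\<^sup>2 = P"
        unfolding cm power2_abs by (rule T.valA(2)[OF P_pos norm_one])
      show "T.F (complex_of_real (sqrt (P * l2 / (l1 + l2))) * cis (\<gamma> + \<alpha>))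
                (complex_of_real (sqrt (P * l1 / (l1 + l2))) * cis \<gamma>) =
             P * l1 * l2 / (l1 + l2) * (1 + T.s)\<^sup>2 / T.c\<^sup>2"
        unfolding F using T.valA(1)[OF P_pos wn] unfolding \<beta>_def \<gamma>_def .
    qed (rule T.upperA[OF r1 r2])
  qed
  have C4: "l1 > l2 \<and> l2 / l1 < T.s \<and> T.s < 1 \<longrightarrow>
           max_attained M P h1 h2
             (V *\<^sub>v vec2 M (complex_of_real (sqrt (P * l1 / (l1 + l2 * (1 / T.s\<^sup>2)))) * cis (\<gamma> + \<alpha>))
                             (complex_of_real (sqrt (P * l2 / (l1 * T.s\<^sup>2 + l2))) * cis \<gamma>))
             (P * (l1 * T.s\<^sup>2 + l2) / T.c\<^sup>2)"
  proof
    assume a: "l1 > l2 \<and> l2 / l1 < T.s \<and> T.s < 1"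
    then have r: "l2 / l1 < T.s" by simp
    have F: "T.F (complex_of_real X * cis (\<gamma> + \<alpha>)) (complex_of_real Y * cis \<gamma>)
        = T.F (complex_of_real X * cis \<beta> * cis (\<gamma> + \<alpha> - \<beta>)) (complex_of_real Y * cis (\<beta> - \<alpha>) * cis (\<gamma> + \<alpha> - \<beta>))"
      for X Y by (simp only: mult.assoc w1 w2)
    show "max_attained M P h1 h2
             (V *\<^sub>v vec2 M (complex_of_real (sqrt (P * l1 / (l1 + l2 * (1 / T.s\<^sup>2)))) * cis (\<gamma> + \<alpha>))
                             (complex_of_real (sqrt (P * l2 / (l1 * T.s\<^sup>2 + l2))) * cis \<gamma>))
             (P * (l1 * T.s\<^sup>2 + l2) / T.c\<^sup>2)"
    proof (rule attain)
      show "(cmod (complex_of_real (sqrt (P * l1 / (l1 + l2 * (1 / T.s\<^sup>2)))) * cis (\<gamma> + \<alpha>)))\<^sup>2 +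
        (cmod (complex_of_real (sqrt (P * l2 / (l1 * T.s\<^sup>2 + l2))) * cis \<gamma>))\<^sup>2 = P"
        unfolding cm power2_abs by (rule T.valB2(2)[OF P_pos norm_one r])
      show "T.F (complex_of_real (sqrt (P * l1 / (l1 + l2 * (1 / T.s\<^sup>2)))) * cis (\<gamma> + \<alpha>))
                (complex_of_real (sqrt (P * l2 / (l1 * T.s\<^sup>2 + l2))) * cis \<gamma>) =
             P * (l1 * T.s\<^sup>2 + l2) / T.c\<^sup>2"
        unfolding F using T.valB2(1)[OF P_pos wn r] unfolding \<beta>_def \<gamma>_def .
    qed (rule T.upperB2)
  qed
  show ?thesis
    unfolding Let_def t1_def[symmetric] t2_def[symmetric] T.c_def[symmetric] T.s_def[symmetric]
      \<beta>_def[symmetric] \<gamma>_def[symmetric]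
    using C1 C2 C3 C4 by blast
qed


theorem theorem3:
  fixes M :: nat and h1 h2 :: "complex vec" and P :: real
  assumes h1_dim: "h1 \<in> carrier_vec M" and h2_dim: "h2 \<in> carrier_vec M"
    and h1_nz: "h1 \<noteq> 0\<^sub>v M" and h2_nz: "h2 \<noteq> 0\<^sub>v M"
    and P_pos: "P > 0"
  shows
    "((\<exists>\<tau>::complex. h1 = \<tau> \<cdot>\<^sub>v h2) \<longrightarrow>
       max_attained M P h1 h2
         (complex_of_real (sqrt P / vnorm h2) \<cdot>\<^sub>v h2)
         (min (P * (vnorm h1)\<^sup>2) (P * (vnorm h2)\<^sup>2))
     \<and> max_attained M P h1 h2
         (complex_of_real (sqrt P / vnorm h1) \<cdot>\<^sub>v h1)
         (min (P * (vnorm h1)\<^sup>2) (P * (vnorm h2)\<^sup>2)))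
   \<and>
    (\<forall>(V :: complex mat) (l1 :: real) (l2 :: real) (\<alpha> :: real).
       (\<forall>a b :: complex. a \<cdot>\<^sub>v h1 + b \<cdot>\<^sub>v h2 = 0\<^sub>v M \<longrightarrow> a = 0 \<and> b = 0)
       \<and> unitary_mat M V \<and> l1 > 0 \<and> l2 > 0
       \<and> outer h1 - outer h2 = V * Sigma_mat M l1 l2 * mat_adjoint V
       \<and> (let t21 = (mat_adjoint V *\<^sub>v h2) $ 0; t22 = (mat_adjoint V *\<^sub>v h2) $ 1
          in t21 \<noteq> 0 \<longrightarrow> \<alpha> = Arg t21 - Arg t22)
     \<longrightarrow>
       (let t1 = mat_adjoint V *\<^sub>v h1; t2 = mat_adjoint V *\<^sub>v h2;
            \<theta> = arccos (sqrt l1 / cmod (t1 $ 0));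
            \<beta> = Arg (t1 $ 0); \<gamma> = Arg (t2 $ 1);
            s = sin \<theta>; c = cos \<theta>;
            e = (\<lambda>x::real. cis x)
        in
        (l1 \<le> l2 \<and> 0 \<le> s \<and> s \<le> l1 / l2 \<longrightarrow>
           max_attained M P h1 h2
             (V *\<^sub>v vec2 M (complex_of_real (sqrt (P * l2 / (l1 + l2))) * e \<beta>)
                             (complex_of_real (sqrt (P * l1 / (l1 + l2))) * e (\<beta> - \<alpha>)))
             (P * l1 * l2 / (l1 + l2) * (1 + s)\<^sup>2 / c\<^sup>2))
      \<and> (l1 \<le> l2 \<and> l1 / l2 < s \<and> s < 1 \<longrightarrow>
           max_attained M P h1 h2
             (V *\<^sub>v vec2 M (complex_of_real (sqrt (P * l1 / (l1 + l2 * s\<^sup>2))) * e \<beta>)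
                             (complex_of_real (sqrt (P * l2 * s\<^sup>2 / (l1 + l2 * s\<^sup>2))) * e (\<beta> - \<alpha>)))
             (P * (l1 + l2 * s\<^sup>2) / c\<^sup>2))
      \<and> (l1 > l2 \<and> 0 \<le> s \<and> s \<le> l2 / l1 \<longrightarrow>
           max_attained M P h1 h2
             (V *\<^sub>v vec2 M (complex_of_real (sqrt (P * l2 / (l1 + l2))) * e (\<gamma> + \<alpha>))
                             (complex_of_real (sqrt (P * l1 / (l1 + l2))) * e \<gamma>))
             (P * l1 * l2 / (l1 + l2) * (1 + s)\<^sup>2 / c\<^sup>2))
      \<and> (l1 > l2 \<and> l2 / l1 < s \<and> s < 1 \<longrightarrow>
           max_attained M P h1 h2
             (V *\<^sub>v vec2 M (complex_of_real (sqrt (P * l1 / (l1 + l2 * (1 / s\<^sup>2)))) * e (\<gamma> + \<alpha>))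
                             (complex_of_real (sqrt (P * l2 / (l1 * s\<^sup>2 + l2))) * e \<gamma>))
             (P * (l1 * s\<^sup>2 + l2) / c\<^sup>2))))"
    apply (intro conjI allI impI)
  subgoal using scen1[OF h1_dim h2_dim h1_nz h2_nz P_pos] by blast
  subgoal using scen1[OF h1_dim h2_dim h1_nz h2_nz P_pos] by blast
  subgoal by (elim conjE, rule scen2[OF h1_dim h2_dim h1_nz P_pos]; assumption)
  done

end
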